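(* Let $H$ be an almost-breakable semigroup and let $x,y\in H$. Then: (i) the principal two-sided ideals $HzH$ ($z\in H$) form a chain under set inclusion; (ii) if $HxH\subsetneq HyH$, then $xyx=x$ and $xy\simeq_H yx\simeq_H x$; (iii) if $x\simeq_H y$, then $\{xy,yx\}=\{x,y\}$; (iv) there are no elements $x,y,z\in H$ with $HxH\subsetneq HyH$ and $HxH\subsetneq HzH$ such that $xy\neq x$ and $zx\neq x$; (v) if $HxH\subsetneq HyH$, $yx\neq x$, and $x'\in H$ satisfies $x\simeq_H x'$, then $x'y=x'$.
   Context: A semigroup $H$ is almost-breakable if for all $x,y\in H$, $xy\in\{x,y\}$ or $yx\in\{x,y\}$. For $z\in H$, $HzH=\{uzv:u,v\in H\}$, and $x\simeq_H y$ means $HxH=HyH$. *)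

theory Defs
  imports Main
begin

text \<open>A semigroup H is modelled as a type of class semigroup_mult (H = UNIV).\<close>

definition almost_breakable :: "'a::semigroup_mult itself \<Rightarrow> bool" where
  "almost_breakable _ \<longleftrightarrow> (\<forall>x y :: 'a. x * y \<in> {x, y} \<or> y * x \<in> {x, y})"

definition pideal :: "'a::semigroup_mult \<Rightarrow> 'a set" where
  "pideal z = {u * z * v | u v. True}"

definition Hequiv :: "'a::semigroup_mult \<Rightarrow> 'a \<Rightarrow> bool" where
  "Hequiv x y \<longleftrightarrow> pideal x = pideal y"

end

theory Submission
  imports Defs
begin

lemma ab_D:
  fixes x y :: "'a::semigroup_mult"
  assumes "almost_breakable TYPE('a)"
  shows "x * y = x \<or> x * y = y \<or> y * x = x \<or> y * x = y"
  using assms unfolding almost_breakable_def by blast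

lemma idem:
  fixes x :: "'a::semigroup_mult"
  assumes "almost_breakable TYPE('a)"
  shows "x * x = x"
  using ab_D[OF assms, of x x] by auto

lemma mem_pideal:
  fixes z :: "'a::semigroup_mult"
  assumes "almost_breakable TYPE('a)"
  shows "z \<in> pideal z"
  unfolding pideal_def using idem[OF assms, of z] by (metis (mono_tags, lifting) mem_Collect_eq)

lemma pideal_sub_iff:
  fixes a b :: "'a::semigroup_mult"
  assumes "almost_breakable TYPE('a)"
  shows "pideal a \<subseteq> pideal b \<longleftrightarrow> a \<in> pideal b"
proof
  assume "pideal a \<subseteq> pideal b" then show "a \<in> pideal b" using mem_pideal[OF assms] by blast
next
  assume "a \<in> pideal b"
  then obtain u v where a: "a = u * b * v" unfolding pideal_def by blast
  show "pideal a \<subseteq> pideal b"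
  proof
    fix w assume "w \<in> pideal a"
    then obtain s t where "w = s * a * t" unfolding pideal_def by blast
    then have "w = (s * u) * b * (v * t)" using a by (simp add: mult.assoc)
    then show "w \<in> pideal b" unfolding pideal_def by blast
  qed
qed

lemma in_pideal: "u * b * v \<in> pideal b"
  unfolding pideal_def by blast

lemma J_rect:
  fixes x y :: "'a::semigroup_mult"
  assumes ab: "almost_breakable TYPE('a)" and J: "pideal x = pideal y"
  shows "x * y * x = x"
proof -
  have "x \<in> pideal y" using J mem_pideal[OF ab] by blast
  then obtain u v where xu: "x = u * y * v" unfolding pideal_def by blast
  have "y \<in> pideal x" using J mem_pideal[OF ab] by blast
  then obtain s t where ys: "y = s * x * t" unfolding pideal_def by blast
  have x1: "x = u * s * x * t * v" using xu ys by (simp add: mult.assoc)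
  have x2: "x = u * s * x"
  proof -
    have "u * s * x = u * s * (u * s * x * t * v)" using x1 by simp
    also have "\<dots> = (u * s) * (u * s) * x * t * v" by (simp add: mult.assoc)
    also have "\<dots> = x" using x1 idem[OF ab, of "u*s"] by simp
    finally show ?thesis by simp
  qed
  have x3: "x = x * t * v"
  proof -
    have "x * t * v = (u * s * x * t * v) * t * v" using x1 by simp
    also have "\<dots> = u * s * x * ((t * v) * (t * v))" by (simp add: mult.assoc)
    also have "\<dots> = x" using x1 idem[OF ab, of "t*v"] by (simp add: mult.assoc)
    finally show ?thesis by simp
  qed
  have xsx: "x * s * x = x"
  proof -
    have "x * s * x = u * ((s * x) * (s * x))" using x2 by (metis mult.assoc)
    also have "\<dots> = x" using x2 idem[OF ab, of "s*x"] by (simp add: mult.assoc)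
    finally show ?thesis .
  qed
  have xtx: "x * t * x = x"
  proof -
    have "x * t * x = ((x * t) * (x * t)) * v" using x3 by (metis mult.assoc)
    also have "\<dots> = x" using x3 idem[OF ab, of "x*t"] by (simp add: mult.assoc)
    finally show ?thesis .
  qed
  have "x * y * x = (x * s * x) * t * x" using ys by (simp add: mult.assoc)
  also have "\<dots> = x" using xsx xtx by simp
  finally show ?thesis .
qed

theorem lemma4p1:
  fixes x y :: "'a::semigroup_mult"
  assumes "almost_breakable TYPE('a)"
  shows "(\<forall>z w :: 'a. pideal z \<subseteq> pideal w \<or> pideal w \<subseteq> pideal z)
    \<and> (pideal x \<subset> pideal y \<longrightarrow> x * y * x = x \<and> Hequiv (x * y) (y * x) \<and> Hequiv (y * x) x)
    \<and> (Hequiv x y \<longrightarrow> {x * y, y * x} = {x, y})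
    \<and> \<not> (\<exists>a b c :: 'a. pideal a \<subset> pideal b \<and> pideal a \<subset> pideal c \<and> a * b \<noteq> a \<and> c * a \<noteq> a)
    \<and> (\<forall>x' :: 'a. pideal x \<subset> pideal y \<and> y * x \<noteq> x \<and> Hequiv x x' \<longrightarrow> x' * y = x')"
proof -
  note ab = assms
  note sub = pideal_sub_iff[OF ab]
  note id = idem[OF ab]
  have chain: "pideal z \<subseteq> pideal w \<or> pideal w \<subseteq> pideal z" for z w :: 'a
  proof -
    have "z * w = z * w * w" "w * z = w * w * z" "z * w = z * z * w" "w * z = w * z * z"
      using id by (simp_all add: mult.assoc)
    then have "z * w \<in> pideal w" "w * z \<in> pideal w" "z * w \<in> pideal z" "w * z \<in> pideal z"
      using in_pideal by metis+
    then show ?thesis using ab_D[OF ab, of z w] sub by metis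
  qed
  have strict: "a * b = a \<or> b * a = a" if "pideal a \<subset> pideal b" for a b :: 'a
  proof -
    have nb: "b \<notin> pideal a" using that sub by blast
    have "a * b \<in> pideal a" "b * a \<in> pideal a"
      using in_pideal by (metis id mult.assoc)+
    then show ?thesis using ab_D[OF ab, of a b] nb by metis
  qed
  have ii: "a * b * a = a \<and> Hequiv (a * b) (b * a) \<and> Hequiv (b * a) a" if "pideal a \<subset> pideal b" for a b :: 'a
  proof -
    have aba: "a * b * a = a" using strict[OF that] id by (metis mult.assoc)
    have e1: "pideal (a * b) = pideal a"
    proof -
      have "a * b \<in> pideal a" using in_pideal by (metis id mult.assoc)
      moreover have "a \<in> pideal (a * b)" using in_pideal aba by (metis id mult.assoc)
      ultimately show ?thesis using sub by blast
    qed
    have e2: "pideal (b * a) = pideal a"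
    proof -
      have "b * a \<in> pideal a" using in_pideal by (metis id mult.assoc)
      moreover have "a \<in> pideal (b * a)" using in_pideal aba by (metis id mult.assoc)
      ultimately show ?thesis using sub by blast
    qed
    show ?thesis using aba e1 e2 unfolding Hequiv_def by simp
  qed
  have iii: "{x * y, y * x} = {x, y}" if "Hequiv x y"
  proof -
    have r1: "x * y * x = x" using J_rect[OF ab] that unfolding Hequiv_def by blast
    have r2: "y * x * y = y" using J_rect[OF ab] that unfolding Hequiv_def by metis
    show ?thesis using ab_D[OF ab, of x y] r1 r2 by (metis insert_commute mult.assoc)
  qed
  have iv: "\<not> (\<exists>a b c :: 'a. pideal a \<subset> pideal b \<and> pideal a \<subset> pideal c \<and> a * b \<noteq> a \<and> c * a \<noteq> a)"
  proof
    assume "\<exists>a b c :: 'a. pideal a \<subset> pideal b \<and> pideal a \<subset> pideal c \<and> a * b \<noteq> a \<and> c * a \<noteq> a"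
    then obtain a b c :: 'a where h: "pideal a \<subset> pideal b" "pideal a \<subset> pideal c" "a * b \<noteq> a" "c * a \<noteq> a"
      by blast
    define p where "p = a * b"
    define q where "q = c * a"
    have aba: "a * b * a = a" using ii[OF h(1)] by blast
    have aca: "a * c * a = a" using ii[OF h(2)] by blast
    have f1: "a * p = p" unfolding p_def using id by (metis mult.assoc)
    have f2: "p * a = a" unfolding p_def using aba .
    have f3: "a * q = a" unfolding q_def using aca by (metis mult.assoc)
    have f4: "q * a = q" unfolding q_def using id by (metis mult.assoc)
    have "p \<noteq> a" "q \<noteq> a" using h p_def q_def by auto
    then show False using ab_D[OF ab, of p q] f1 f2 f3 f4 by (metis mult.assoc)
  qed
  have v: "x' * y = x'" if h: "pideal x \<subset> pideal y" "y * x \<noteq> x" "Hequiv x x'" for x' :: 'a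
  proof -
    define p where "p = y * x"
    have xy: "x * y = x" using strict[OF h(1)] h(2) by blast
    have F1: "x * p = x" unfolding p_def using ii[OF h(1)] by (simp add: mult.assoc)
    have F2: "p * x = p" unfolding p_def using id by (metis mult.assoc)
    have pnx: "p \<noteq> x" using h(2) p_def by simp
    have F4: "x' * x * x' = x'" using J_rect[OF ab] h(3) unfolding Hequiv_def by metis
    have F5: "x * x' * x = x" using J_rect[OF ab] h(3) unfolding Hequiv_def by metis
    have Jp: "pideal p = pideal x'" using ii[OF h(1)] h(3) unfolding Hequiv_def p_def by metis
    have F6: "p * x' * p = p" using J_rect[OF ab Jp] .
    have F7: "x' * p * x' = x'" using J_rect[OF ab Jp[symmetric]] .
    have "x' * x = x'"
    proof -
      consider "x' * x = x'" | "x * x' = x" | "x * x' = x'" | "x' * x = x"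
        using ab_D[OF ab, of x x'] by blast
      then show ?thesis
      proof cases
        case 1 then show ?thesis .
      next
        case 2 then show ?thesis using F4 by (metis mult.assoc)
      next
        case 3
        have xx: "x' * x = x" using 3 F5 by metis
        consider "p * x' = p" | "p * x' = x'" | "x' * p = x'" | "x' * p = p"
          using ab_D[OF ab, of p x'] by blast
        then show ?thesis
        proof cases
          case 1 then show ?thesis using F1 3 xx id by (metis mult.assoc)
        next
          case 2 then show ?thesis using xx F2 pnx by (metis mult.assoc)
        next
          case 3 then show ?thesis using F2 by (metis mult.assoc)
        next
          case 4 then show ?thesis using F1 \<open>x * x' = x'\<close> pnx by (metis mult.assoc)
        qed
      next
        case 4
        have 3: "x * x' = x'" using 4 F4 by (metis mult.assoc)
        have xx: "x' * x = x" using 4 .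
        consider "p * x' = p" | "p * x' = x'" | "x' * p = x'" | "x' * p = p"
          using ab_D[OF ab, of p x'] by blast
        then show ?thesis
        proof cases
          case 1 then show ?thesis using F1 3 xx id by (metis mult.assoc)
        next
          case 2 then show ?thesis using xx F2 pnx by (metis mult.assoc)
        next
          case 3 then show ?thesis using F2 by (metis mult.assoc)
        next
          case 4 then show ?thesis using F1 3 pnx by (metis mult.assoc)
        qed
      qed
    qed
    then show ?thesis using xy by (metis mult.assoc)
  qed
  show ?thesis using chain ii iii iv v by blast
qed

end
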